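(* Let $(V,E)$ be a finite connected bipartite graph with sides $S_1,S_2$, every edge having weight $1$ (so $m(v)$ is the degree of $v$), and let $\mathbb{E}$ be a Banach space. Let $P_1,P_2,P_{1,2}$ be the operators on $\ell^2(E;\mathbb{E})$ defined below. Then $P_{1,2}P_i=P_iP_{1,2}=P_{1,2}$ for $i=1,2$, and $$\max\{\|P_1P_2-P_{1,2}\|,\|P_2P_1-P_{1,2}\|\}=\lambda^{\mathbb{E}}_{(V,E),\mathrm{bipartite}}.$$
   Context: $\ell^2(E;\mathbb{E})$ is the space of maps $\Phi:E\to\mathbb{E}$ with $\|\Phi\|^2=\sum_{e\in E}|\Phi(e)|^2$. For $i=1,2$ and an edge $\{v_1,v_2\}$ with $v_1\in S_1,v_2\in S_2$: $P_i\Phi(\{v_1,v_2\})=\frac1{m(v_i)}\sum_{\{v_i,u\}\in E}\Phi(\{v_i,u\})$; and $P_{1,2}\Phi\equiv\frac1{|E|}\sum_{e\in E}\Phi(e)$. $\ell^2(V,m;\mathbb{E})$ is the space of maps $\phi:V\to\mathbb{E}$ with $\|\phi\|^2=\sum_v m(v)|\phi(v)|^2$; the random walk is $(A\phi)(v)=\frac1{m(v)}\sum_{u:\{u,v\}\in E}\phi(u)$; $M_{\mathrm{sides}}\phi(u)=\frac1{m(S_i)}\sum_{w\in S_i}m(w)\phi(w)$ for $u\in S_i$, with $m(S_i)=\sum_{w\in S_i}m(w)$; and $\lambda^{\mathbb{E}}_{(V,E),\mathrm{bipartite}}$ is the operator norm of $A(I-M_{\mathrm{sides}})$ acting by these formulas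 on $\ell^2(V,m;\mathbb{E})$. *)

theory Defs
  imports "HOL-Analysis.Analysis"
begin

text \<open>Graphs: vertex set V :: 'v set, edges E :: 'v set set (two-element sets), unit weights.\<close>

definition deg :: "'v set set \<Rightarrow> 'v \<Rightarrow> real" where
  "deg E v = real (card {e\<in>E. v \<in> e})"

definition side_weight :: "'v set set \<Rightarrow> 'v set \<Rightarrow> real" where
  "side_weight E S = (\<Sum>w\<in>S. deg E w)"

definition connected_graph :: "'v set \<Rightarrow> 'v set set \<Rightarrow> bool" where
  "connected_graph V E \<longleftrightarrow>
     (\<forall>u\<in>V. \<forall>v\<in>V. (u, v) \<in> {(x, y). {x, y} \<in> E}\<^sup>*)"

definition bipartite_sides :: "'v set \<Rightarrow> 'v set set \<Rightarrow> 'v set \<Rightarrow> 'v set \<Rightarrow> bool" where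
  "bipartite_sides V E S1 S2 \<longleftrightarrow>
     S1 \<inter> S2 = {} \<and> S1 \<union> S2 = V \<and>
     (\<forall>e\<in>E. \<exists>v1\<in>S1. \<exists>v2\<in>S2. e = {v1, v2})"

definition wl2norm :: "'x set \<Rightarrow> ('x \<Rightarrow> real) \<Rightarrow> ('x \<Rightarrow> 'b::real_normed_vector) \<Rightarrow> real" where
  "wl2norm X w f = sqrt (\<Sum>x\<in>X. w x * (norm (f x))\<^sup>2)"

definition wl2opnorm :: "'x set \<Rightarrow> ('x \<Rightarrow> real)
    \<Rightarrow> (('x \<Rightarrow> 'b::real_normed_vector) \<Rightarrow> ('x \<Rightarrow> 'b)) \<Rightarrow> real" where
  "wl2opnorm X w T = (SUP f\<in>{f. wl2norm X w f \<le> 1}. wl2norm X w (T f))"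

definition endpt :: "'v set \<Rightarrow> 'v set \<Rightarrow> 'v" where
  "endpt S e = (THE v. v \<in> e \<and> v \<in> S)"

definition Pside :: "'v set set \<Rightarrow> 'v set \<Rightarrow> ('v set \<Rightarrow> 'b::real_normed_vector) \<Rightarrow> ('v set \<Rightarrow> 'b)" where
  "Pside E S \<Phi> = (\<lambda>e. (1 / deg E (endpt S e)) *\<^sub>R (\<Sum>e'\<in>{e'\<in>E. endpt S e \<in> e'}. \<Phi> e'))"

definition Pall :: "'v set set \<Rightarrow> ('v set \<Rightarrow> 'b::real_normed_vector) \<Rightarrow> ('v set \<Rightarrow> 'b)" where
  "Pall E \<Phi> = (\<lambda>e. (1 / real (card E)) *\<^sub>R (\<Sum>e'\<in>E. \<Phi> e'))"

definition Awalk :: "'v set \<Rightarrow> 'v set set \<Rightarrow> ('v \<Rightarrow> 'b::real_normed_vector) \<Rightarrow> ('v \<Rightarrow> 'b)" where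
  "Awalk V E \<phi> = (\<lambda>v. (1 / deg E v) *\<^sub>R (\<Sum>u\<in>{u\<in>V. {u, v} \<in> E}. \<phi> u))"

definition Msides :: "'v set set \<Rightarrow> 'v set \<Rightarrow> 'v set \<Rightarrow> ('v \<Rightarrow> 'b::real_normed_vector) \<Rightarrow> ('v \<Rightarrow> 'b)" where
  "Msides E S1 S2 \<phi> = (\<lambda>u.
     if u \<in> S1 then (1 / side_weight E S1) *\<^sub>R (\<Sum>w\<in>S1. deg E w *\<^sub>R \<phi> w)
     else if u \<in> S2 then (1 / side_weight E S2) *\<^sub>R (\<Sum>w\<in>S2. deg E w *\<^sub>R \<phi> w)
     else 0)"

definition lambda_bip :: "'b::real_normed_vector itself \<Rightarrow> 'v set \<Rightarrow> 'v set set \<Rightarrow> 'v set \<Rightarrow> 'v set \<Rightarrow> real" where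
  "lambda_bip _ V E S1 S2 =
     wl2opnorm V (deg E) (\<lambda>\<phi>::'v \<Rightarrow> 'b. Awalk V E (\<lambda>v. \<phi> v - Msides E S1 S2 \<phi> v))"

end

theory Submission
  imports Defs
begin

definition nb :: "'v set set \<Rightarrow> 'v \<Rightarrow> 'v set set" where "nb E v = {e\<in>E. v \<in> e}"

definition Tw :: "'v set \<Rightarrow> 'v set set \<Rightarrow> 'v set \<Rightarrow> 'v set \<Rightarrow> ('v \<Rightarrow> 'b::real_normed_vector) \<Rightarrow> 'v \<Rightarrow> 'b" where
  "Tw V E S1 S2 \<phi> = Awalk V E (\<lambda>v. \<phi> v - Msides E S1 S2 \<phi> v)"

definition gf :: "'v set set \<Rightarrow> 'v set \<Rightarrow> ('v set \<Rightarrow> 'b::real_normed_vector) \<Rightarrow> 'v \<Rightarrow> 'b" where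
  "gf E S2 \<Phi> u = (if u \<in> S2 then (1 / deg E u) *\<^sub>R (\<Sum>e\<in>nb E u. \<Phi> e) else 0)"

lemma wl2norm_cong: "(\<And>x. x \<in> X \<Longrightarrow> f x = g x) \<Longrightarrow> wl2norm X w f = wl2norm X w g"
  unfolding wl2norm_def by (metis (no_types, lifting) sum.cong)

lemma wl2norm_nonneg: "(\<And>x. x \<in> X \<Longrightarrow> w x \<ge> 0) \<Longrightarrow> wl2norm X w f \<ge> 0"
  unfolding wl2norm_def by (simp add: sum_nonneg)

lemma wl2norm_scale: assumes "\<And>x. x \<in> X \<Longrightarrow> w x \<ge> 0"
  shows "wl2norm X w (\<lambda>x. c *\<^sub>R f x) = \<bar>c\<bar> * wl2norm X w f"
proof -
  have "(\<Sum>x\<in>X. w x * (norm (c *\<^sub>R f x))\<^sup>2) = c\<^sup>2 * (\<Sum>x\<in>X. w x * (norm (f x))\<^sup>2)"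
    by (simp add: sum_distrib_left power_mult_distrib algebra_simps)
  thus ?thesis unfolding wl2norm_def by (simp add: real_sqrt_mult)
qed

lemma wl2norm_pt: assumes "finite X" "x \<in> X" shows "norm (f x) \<le> wl2norm X (\<lambda>_. 1) f"
proof -
  have "(norm (f x))\<^sup>2 \<le> (\<Sum>y\<in>X. 1 * (norm (f y))\<^sup>2)"
    using member_le_sum[of x X "\<lambda>y. (norm (f y))\<^sup>2"] assms by simp
  hence "sqrt ((norm (f x))\<^sup>2) \<le> wl2norm X (\<lambda>_. 1) f" unfolding wl2norm_def
    using real_sqrt_le_mono by blast
  thus ?thesis by simp
qed

lemma wl2norm_zero: "wl2norm X w (\<lambda>_. 0) = 0"
  unfolding wl2norm_def by simp

lemma opnorm_le: fixes T :: "('x \<Rightarrow> 'b::real_normed_vector) \<Rightarrow> ('x \<Rightarrow> 'b)"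
  assumes "\<And>f. wl2norm X w f \<le> 1 \<Longrightarrow> wl2norm X w (T f) \<le> C"
  shows "wl2opnorm X w T \<le> C"
  unfolding wl2opnorm_def
proof (rule cSUP_least)
  have "(\<lambda>_. 0::'b) \<in> {f::'x \<Rightarrow> 'b. wl2norm X w f \<le> 1}" by (simp add: wl2norm_def)
  thus "{f::'x \<Rightarrow> 'b. wl2norm X w f \<le> 1} \<noteq> {}" by blast
next
  fix f :: "'x \<Rightarrow> 'b" assume "f \<in> {f. wl2norm X w f \<le> 1}"
  thus "wl2norm X w (T f) \<le> C" using assms by blast
qed

lemma opnorm_ge: assumes "bdd_above ((\<lambda>f. wl2norm X w (T f)) ` {f. wl2norm X w f \<le> 1})"
  and "wl2norm X w f \<le> 1"
  shows "wl2norm X w (T f) \<le> wl2opnorm X w T"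
  unfolding wl2opnorm_def by (rule cSUP_upper) (use assms in auto)

lemma opnorm_scale:
  assumes hom: "\<And>f c. wl2norm X w (T (\<lambda>x. c *\<^sub>R f x)) = \<bar>c\<bar> * wl2norm X w (T f)"
    and wpos: "\<And>x. x \<in> X \<Longrightarrow> w x \<ge> 0"
    and bdd: "bdd_above ((\<lambda>f. wl2norm X w (T f)) ` {f. wl2norm X w f \<le> 1})"
  shows "wl2norm X w (T f) \<le> wl2opnorm X w T * wl2norm X w f"
proof -
  define n where "n = wl2norm X w f"
  define N where "N = wl2opnorm X w T"
  define t where "t = wl2norm X w (T f)"
  have n0: "n \<ge> 0" unfolding n_def using wl2norm_nonneg wpos by blast
  have t0: "t \<ge> 0" unfolding t_def using wl2norm_nonneg wpos by blast
  have key: "\<And>c. \<bar>c\<bar> * n \<le> 1 \<Longrightarrow> \<bar>c\<bar> * t \<le> N"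
  proof -
    fix c :: real assume "\<bar>c\<bar> * n \<le> 1"
    hence "wl2norm X w (\<lambda>x. c *\<^sub>R f x) \<le> 1" using wl2norm_scale[where X=X and w=w and c=c and f=f, OF wpos] n_def by simp
    from opnorm_ge[OF bdd this] show "\<bar>c\<bar> * t \<le> N" unfolding N_def t_def hom .
  qed
  show ?thesis
  proof (cases "n = 0")
    case True
    have "t = 0"
    proof (rule ccontr)
      assume "t \<noteq> 0"
      hence tp: "t > 0" using t0 by simp
      have "\<bar>(\<bar>N\<bar> + 1) / t\<bar> * t \<le> N" using key[of "(\<bar>N\<bar> + 1) / t"] True by (simp only: mult_zero_right zero_le_one)
      moreover have "\<bar>(\<bar>N\<bar> + 1) / t\<bar> * t = \<bar>N\<bar> + 1" using tp by (simp add: abs_of_pos)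
      ultimately show False by simp
    qed
    thus ?thesis using True unfolding t_def n_def by simp
  next
    case False
    hence np: "n > 0" using n0 by simp
    have "\<bar>1 / n\<bar> * n \<le> 1" using np by (simp add: abs_of_pos)
    hence "\<bar>1 / n\<bar> * t \<le> N" by (rule key)
    hence "t / n \<le> N" using np by simp
    thus ?thesis using np unfolding t_def[symmetric] n_def[symmetric] N_def[symmetric]
      by (simp add: divide_le_eq)
  qed
qed

definition Q :: "'v set set \<Rightarrow> 'v set \<Rightarrow> 'v set \<Rightarrow> ('v set \<Rightarrow> 'b::real_normed_vector) \<Rightarrow> 'v set \<Rightarrow> 'b" where
  "Q E S1 S2 \<Phi> = (\<lambda>e. Pside E S1 (Pside E S2 \<Phi>) e - Pall E \<Phi> e)"

lemma Pside_scale: "Pside E S (\<lambda>x. c *\<^sub>R \<Phi> x) = (\<lambda>e. c *\<^sub>R Pside E S \<Phi> e)"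
  unfolding Pside_def by (simp add: fun_eq_iff scaleR_sum_right[symmetric])

lemma Pall_scale: "Pall E (\<lambda>x. c *\<^sub>R \<Phi> x) = (\<lambda>e. c *\<^sub>R Pall E \<Phi> e)"
  unfolding Pall_def by (simp add: fun_eq_iff scaleR_sum_right[symmetric])

lemma Q_scale: "Q E S1 S2 (\<lambda>x. c *\<^sub>R \<Phi> x) = (\<lambda>e. c *\<^sub>R Q E S1 S2 \<Phi> e)"
  unfolding Q_def by (simp add: Pside_scale Pall_scale scaleR_diff_right)

lemma Q_hom: "wl2norm E (\<lambda>_. 1) (Q E S1 S2 (\<lambda>x. c *\<^sub>R \<Phi> x)) = \<bar>c\<bar> * wl2norm E (\<lambda>_. 1) (Q E S1 S2 \<Phi>)"
  unfolding Q_scale by (rule wl2norm_scale) simp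

lemma avg_bound:
  assumes "finite A" "\<And>a. a \<in> A \<Longrightarrow> norm (x a) \<le> B" "B \<ge> 0"
  shows "norm ((1 / real (card A)) *\<^sub>R (\<Sum>a\<in>A. x a)) \<le> B"
proof (cases "card A = 0")
  case True thus ?thesis using assms by simp
next
  case False
  have "norm (\<Sum>a\<in>A. x a) \<le> (\<Sum>a\<in>A. norm (x a))" by (rule norm_sum)
  also have "\<dots> \<le> real (card A) * B" using sum_bounded_above[of A "\<lambda>a. norm (x a)" B] assms by simp
  finally have "norm (\<Sum>a\<in>A. x a) \<le> real (card A) * B" .
  thus ?thesis using False by (simp add: divide_le_eq mult.commute)
qed

lemma Pside_bound: assumes "finite E" "\<And>e. e \<in> E \<Longrightarrow> norm (\<Phi> e) \<le> B" "B \<ge> 0"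
  shows "norm (Pside E S \<Phi> e) \<le> B"
  unfolding Pside_def deg_def by (rule avg_bound) (use assms in auto)

lemma Pall_bound: assumes "finite E" "\<And>e. e \<in> E \<Longrightarrow> norm (\<Phi> e) \<le> B" "B \<ge> 0"
  shows "norm (Pall E \<Phi> e) \<le> B"
  unfolding Pall_def by (rule avg_bound) (use assms in auto)

lemma Q_bdd: assumes "finite E"
  shows "bdd_above ((\<lambda>\<Phi>. wl2norm E (\<lambda>_. 1) (Q E S1 S2 \<Phi>)) ` {\<Phi>. wl2norm E (\<lambda>_. 1) \<Phi> \<le> 1})"
proof (rule bdd_aboveI2)
  fix \<Phi> assume "\<Phi> \<in> {\<Phi>. wl2norm E (\<lambda>_. 1) \<Phi> \<le> 1}"
  hence n1: "wl2norm E (\<lambda>_. 1) \<Phi> \<le> 1" by simp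
  have b1: "\<And>e. e \<in> E \<Longrightarrow> norm (\<Phi> e) \<le> 1" using wl2norm_pt[OF assms, of _ \<Phi>] n1 by force
  have b1': "\<And>e. norm (Pside E S2 \<Phi> e) \<le> 1" using Pside_bound[OF assms b1] by simp
  have b2: "\<And>e. norm (Pside E S1 (Pside E S2 \<Phi>) e) \<le> 1" using Pside_bound[OF assms b1'] by simp
  have b3: "\<And>e. norm (Pall E \<Phi> e) \<le> 1" using Pall_bound[OF assms b1] by simp
  have q2: "norm (Q E S1 S2 \<Phi> e) \<le> 2" for e
  proof -
    have "norm (Q E S1 S2 \<Phi> e) \<le> norm (Pside E S1 (Pside E S2 \<Phi>) e) + norm (Pall E \<Phi> e)"
      unfolding Q_def by (rule norm_triangle_ineq4)
    thus ?thesis using b2[of e] b3[of e] by linarith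
  qed
  have "1 * (norm (Q E S1 S2 \<Phi> e))\<^sup>2 \<le> 4" for e
    using power_mono[OF q2[of e] norm_ge_zero, of 2] by simp
  hence "(\<Sum>e\<in>E. 1 * (norm (Q E S1 S2 \<Phi> e))\<^sup>2) \<le> (\<Sum>e\<in>E. 4)" by (intro sum_mono) auto
  thus "wl2norm E (\<lambda>_. 1) (Q E S1 S2 \<Phi>) \<le> sqrt (4 * real (card E))"
    unfolding wl2norm_def by (simp add: real_sqrt_le_mono)
qed

lemma sq_from_sqrt: assumes "a \<ge> 0" "b \<ge> 0" "N \<ge> 0" "sqrt a \<le> N * sqrt b"
  shows "a \<le> N\<^sup>2 * b"
proof -
  have "(sqrt a)\<^sup>2 \<le> (N * sqrt b)\<^sup>2" by (rule power_mono) (use assms in simp_all)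
  thus ?thesis using assms by (simp add: power_mult_distrib)
qed

locale bip =
  fixes V :: "'v set" and E :: "'v set set" and S1 S2 :: "'v set"
  assumes finV: "finite V" and Ene: "E \<noteq> {}" and EV: "\<forall>e\<in>E. e \<subseteq> V"
    and bips: "bipartite_sides V E S1 S2" and conn: "connected_graph V E"
begin

lemma disj: "S1 \<inter> S2 = {}" and VS: "V = S1 \<union> S2"
  and edge: "e \<in> E \<Longrightarrow> \<exists>v1\<in>S1. \<exists>v2\<in>S2. e = {v1, v2}"
  using bips unfolding bipartite_sides_def by auto

lemma finE: "finite E"
proof -
  have "E \<subseteq> Pow V" using EV by auto
  thus ?thesis using finV finite_subset by blast
qed

lemma finS1: "finite S1" and finS2: "finite S2" using finV VS by auto

lemma endpt1: assumes "e \<in> E" shows "endpt S1 e \<in> e" "endpt S1 e \<in> S1"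
proof -
  obtain a b where ab: "a \<in> S1" "b \<in> S2" "e = {a,b}" using edge assms by blast
  have "endpt S1 e = a" unfolding endpt_def
    using ab disj by (intro the_equality) auto
  thus "endpt S1 e \<in> e" "endpt S1 e \<in> S1" using ab by auto
qed

lemma endpt2: assumes "e \<in> E" shows "endpt S2 e \<in> e" "endpt S2 e \<in> S2"
proof -
  obtain a b where ab: "a \<in> S1" "b \<in> S2" "e = {a,b}" using edge assms by blast
  have "endpt S2 e = b" unfolding endpt_def
    using ab disj by (intro the_equality) auto
  thus "endpt S2 e \<in> e" "endpt S2 e \<in> S2" using ab by auto
qed

lemma e_eq: "e \<in> E \<Longrightarrow> e = {endpt S1 e, endpt S2 e}"
proof -
  assume e: "e \<in> E"
  obtain a b where ab: "a \<in> S1" "b \<in> S2" "e = {a,b}" using edge e by blast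
  have "endpt S1 e = a" unfolding endpt_def
    using ab disj by (intro the_equality) auto
  moreover have "endpt S2 e = b" unfolding endpt_def
    using ab disj by (intro the_equality) auto
  ultimately show ?thesis using ab by auto
qed

lemma endpt1_iff: assumes "e \<in> E" "v \<in> S1" shows "v \<in> e \<longleftrightarrow> endpt S1 e = v"
proof -
  define a b where "a = endpt S1 e" and "b = endpt S2 e"
  have "v \<noteq> endpt S2 e" using endpt2[OF assms(1)] assms(2) disj by blast
  moreover have "e = {a, b}" using e_eq[OF assms(1)] unfolding a_def b_def .
  ultimately show ?thesis unfolding a_def[symmetric] b_def[symmetric] by auto
qed

lemma endpt2_iff: assumes "e \<in> E" "v \<in> S2" shows "v \<in> e \<longleftrightarrow> endpt S2 e = v"
proof -
  define a b where "a = endpt S1 e" and "b = endpt S2 e"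
  have "v \<noteq> endpt S1 e" using endpt1[OF assms(1)] assms(2) disj by blast
  moreover have "e = {a, b}" using e_eq[OF assms(1)] unfolding a_def b_def .
  ultimately show ?thesis unfolding a_def[symmetric] b_def[symmetric] by auto
qed

lemma swap: "bip V E S2 S1"
proof -
  have "bipartite_sides V E S2 S1"
    unfolding bipartite_sides_def
  proof (intro conjI ballI)
    show "S2 \<inter> S1 = {}" using disj by blast
    show "S2 \<union> S1 = V" using VS by blast
    fix e assume "e \<in> E"
    then obtain a b where "a \<in> S1" "b \<in> S2" "e = {a,b}" using edge by blast
    thus "\<exists>v1\<in>S2. \<exists>v2\<in>S1. e = {v1, v2}" by (metis insert_commute)
  qed
  thus ?thesis unfolding bip_def using finV Ene EV conn by blast
qed

lemma Msides_swap: "Msides E S2 S1 = Msides E S1 S2"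
  using disj by (auto simp: Msides_def fun_eq_iff)

lemma deg_pos: assumes "v \<in> V" shows "deg E v > 0"
proof -
  obtain e0 where e0: "e0 \<in> E" using Ene by blast
  obtain a b where ab: "a \<in> S1" "b \<in> S2" "e0 = {a,b}" using edge e0 by blast
  have "a \<in> V" using ab VS by auto
  hence "(v, a) \<in> {(x, y). {x, y} \<in> E}\<^sup>*" using conn assms unfolding connected_graph_def by blast
  hence "\<exists>e\<in>E. v \<in> e"
  proof (cases rule: converse_rtranclE)
    case base then show ?thesis using ab e0 by auto
  next
    case (step y) then show ?thesis by auto
  qed
  then obtain e where "e \<in> E" "v \<in> e" by blast
  hence "{e\<in>E. v \<in> e} \<noteq> {}" by auto
  moreover have "finite {e\<in>E. v \<in> e}" using finE by auto
  ultimately show ?thesis unfolding deg_def by (simp add: card_gt_0_iff)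
qed



lemma deg_nb: "deg E v = real (card (nb E v))" unfolding deg_def nb_def by simp

lemma fin_nb: "finite (nb E v)" using finE unfolding nb_def by auto

lemma regroup: "(\<Sum>e\<in>E. h e) = (\<Sum>v\<in>S1. \<Sum>e\<in>nb E v. h e)"
proof -
  have "(\<Sum>v\<in>S1. \<Sum>e\<in>{e. e \<in> E \<and> endpt S1 e = v}. h e) = (\<Sum>e\<in>E. h e)"
    by (rule sum.group) (use finE finS1 endpt1 in auto)
  moreover have "\<And>v. v \<in> S1 \<Longrightarrow> {e. e \<in> E \<and> endpt S1 e = v} = nb E v"
    unfolding nb_def using endpt1_iff by auto
  ultimately show ?thesis by (metis (no_types, lifting) sum.cong)
qed

lemma endpt2_pair: assumes v: "v \<in> S1" and e: "{u,v} \<in> E" shows "endpt S2 {u,v} = u"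
proof -
  have "endpt S1 {u,v} = v" using endpt1_iff[OF e v] by auto
  thus ?thesis using e_eq[OF e] endpt2[OF e] disj v
    by (metis doubleton_eq_iff insertE insert_absorb2 singletonD)
qed

lemma nbr_sum: assumes v: "v \<in> S1"
  shows "(\<Sum>u\<in>{u\<in>V. {u, v} \<in> E}. \<phi> u) = (\<Sum>e\<in>nb E v. \<phi> (endpt S2 e))"
proof -
  have A: "\<And>e. e \<in> nb E v \<Longrightarrow> {endpt S2 e, v} = e"
  proof -
    fix e assume e: "e \<in> nb E v"
    hence eE: "e \<in> E" and ve: "v \<in> e" unfolding nb_def by auto
    have "endpt S1 e = v" using endpt1_iff[OF eE v] ve by auto
    thus "{endpt S2 e, v} = e" using e_eq[OF eE] by auto
  qed
  have B: "\<And>e. e \<in> nb E v \<Longrightarrow> endpt S2 e \<in> {u\<in>V. {u, v} \<in> E}"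
    using A EV endpt2 unfolding nb_def by auto
  have C: "\<And>u. u \<in> {u\<in>V. {u, v} \<in> E} \<Longrightarrow> endpt S2 {u, v} = u"
    using endpt2_pair[OF v] by auto
  have D: "\<And>u. u \<in> {u\<in>V. {u, v} \<in> E} \<Longrightarrow> {u, v} \<in> nb E v"
    unfolding nb_def by auto
  show ?thesis
    apply (rule sum.reindex_bij_witness[where j = "\<lambda>u. {u, v}" and i = "endpt S2"])
    subgoal using C by blast
    subgoal using D by blast
    subgoal using A by blast
    subgoal using B by blast
    subgoal using C by metis
    done
qed

lemma Pside_eq: "Pside E S1 \<Phi> e = (1 / deg E (endpt S1 e)) *\<^sub>R (\<Sum>e'\<in>nb E (endpt S1 e). \<Phi> e')"
  unfolding Pside_def nb_def by simp

lemma sum_Pside: "(\<Sum>e\<in>E. Pside E S1 \<Phi> e) = (\<Sum>e\<in>E. \<Phi> e)"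
proof -
  have "(\<Sum>e\<in>E. Pside E S1 \<Phi> e) = (\<Sum>v\<in>S1. \<Sum>e\<in>nb E v. Pside E S1 \<Phi> e)" using regroup[of "Pside E S1 \<Phi>"] by simp
  also have "\<dots> = (\<Sum>v\<in>S1. \<Sum>e\<in>nb E v. (1 / deg E v) *\<^sub>R (\<Sum>e'\<in>nb E v. \<Phi> e'))"
  proof (intro sum.cong refl)
    fix v e assume "v \<in> S1" "e \<in> nb E v"
    hence "endpt S1 e = v" using endpt1_iff unfolding nb_def by auto
    thus "Pside E S1 \<Phi> e = (1 / deg E v) *\<^sub>R (\<Sum>e'\<in>nb E v. \<Phi> e')" by (simp add: Pside_eq)
  qed
  also have "\<dots> = (\<Sum>v\<in>S1. \<Sum>e'\<in>nb E v. \<Phi> e')"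
  proof (rule sum.cong[OF refl])
    fix v assume "v \<in> S1"
    hence "deg E v > 0" using deg_pos VS by auto
    thus "(\<Sum>e\<in>nb E v. (1 / deg E v) *\<^sub>R (\<Sum>e'\<in>nb E v. \<Phi> e')) = (\<Sum>e'\<in>nb E v. \<Phi> e')"
      by (simp add: deg_nb sum_constant_scaleR)
  qed
  also have "\<dots> = (\<Sum>e\<in>E. \<Phi> e)" using regroup[of "\<Phi>"] by simp
  finally show ?thesis .
qed

lemma Pall_Pside: "Pall E (Pside E S1 \<Phi>) e = Pall E \<Phi> e"
  unfolding Pall_def using sum_Pside by (simp add: finE Ene)

lemma Pside_Pall: assumes "e \<in> E" shows "Pside E S1 (Pall E \<Phi>) e = Pall E \<Phi> e"
proof -
  have "e \<in> nb E (endpt S1 e)" using assms endpt1 unfolding nb_def by auto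
  hence "deg E (endpt S1 e) > 0" using deg_pos EV endpt1 assms by auto
  thus ?thesis unfolding Pside_eq by (simp add: Pall_def deg_nb sum_constant_scaleR)
qed


lemma regroup2: "(\<Sum>e\<in>E. h e) = (\<Sum>v\<in>S2. \<Sum>e\<in>nb E v. h e)"
  by (rule bip.regroup[OF swap, where h=h])

lemma sw1: "side_weight E S1 = real (card E)"
proof -
  have "real (card E) = (\<Sum>e\<in>E. (1::real))" by simp
  also have "\<dots> = (\<Sum>v\<in>S1. \<Sum>e\<in>nb E v. (1::real))" by (rule regroup[where h="\<lambda>e. 1::real"])
  also have "\<dots> = side_weight E S1" unfolding side_weight_def deg_nb by simp
  finally show ?thesis by simp
qed

lemma sw2: "side_weight E S2 = real (card E)"
  using bip.sw1[OF swap] .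

lemma Msides_S2: "u \<in> S2 \<Longrightarrow> Msides E S1 S2 \<phi> u = (1 / real (card E)) *\<^sub>R (\<Sum>w\<in>S2. deg E w *\<^sub>R \<phi> w)"
  using disj sw2 unfolding Msides_def by auto

lemma Msides_S1: "u \<in> S1 \<Longrightarrow> Msides E S1 S2 \<phi> u = (1 / real (card E)) *\<^sub>R (\<Sum>w\<in>S1. deg E w *\<^sub>R \<phi> w)"
  using disj sw1 unfolding Msides_def by auto

lemma sum_gf: "(\<Sum>w\<in>S2. deg E w *\<^sub>R gf E S2 \<Phi> w) = (\<Sum>e\<in>E. \<Phi> e)"
proof -
  have "(\<Sum>w\<in>S2. deg E w *\<^sub>R gf E S2 \<Phi> w) = (\<Sum>w\<in>S2. \<Sum>e\<in>nb E w. \<Phi> e)"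
  proof (rule sum.cong[OF refl])
    fix w assume w: "w \<in> S2"
    hence "deg E w > 0" using deg_pos VS by auto
    thus "deg E w *\<^sub>R gf E S2 \<Phi> w = (\<Sum>e\<in>nb E w. \<Phi> e)" using w unfolding gf_def by simp
  qed
  also have "\<dots> = (\<Sum>e\<in>E. \<Phi> e)" using regroup2[of \<Phi>] by simp
  finally show ?thesis .
qed

lemma Pside2_gf: "e \<in> E \<Longrightarrow> Pside E S2 \<Phi> e = gf E S2 \<Phi> (endpt S2 e)"
  using bip.Pside_eq[OF swap, of \<Phi> e] endpt2[of e] unfolding gf_def
  by simp

lemma K1: assumes e: "e \<in> E"
  shows "Pside E S1 (Pside E S2 \<Phi>) e - Pall E \<Phi> e = Tw V E S1 S2 (gf E S2 \<Phi>) (endpt S1 e)"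
proof -
  define v where "v = endpt S1 e"
  have v: "v \<in> S1" using endpt1 e v_def by auto
  have dpos: "deg E v > 0" using deg_pos v VS by auto
  define C where "C = (1 / real (card E)) *\<^sub>R (\<Sum>e\<in>E. \<Phi> e)"
  have nbE: "\<And>e'. e' \<in> nb E v \<Longrightarrow> e' \<in> E" unfolding nb_def by auto
  have L: "Pside E S1 (Pside E S2 \<Phi>) e = (1 / deg E v) *\<^sub>R (\<Sum>e'\<in>nb E v. gf E S2 \<Phi> (endpt S2 e'))"
  proof -
    have "(\<Sum>e'\<in>nb E v. Pside E S2 \<Phi> e') = (\<Sum>e'\<in>nb E v. gf E S2 \<Phi> (endpt S2 e'))"
      by (rule sum.cong[OF refl]) (simp add: Pside2_gf nbE)
    thus ?thesis unfolding Pside_eq v_def[symmetric] by simp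
  qed
  have M: "Msides E S1 S2 (gf E S2 \<Phi>) (endpt S2 e') = C" if h: "e' \<in> nb E v" for e'
  proof -
    have "endpt S2 e' \<in> S2" using endpt2 nbE h by blast
    thus ?thesis by (simp add: Msides_S2 sum_gf C_def)
  qed
  have "Tw V E S1 S2 (gf E S2 \<Phi>) v = (1 / deg E v) *\<^sub>R (\<Sum>e'\<in>nb E v. gf E S2 \<Phi> (endpt S2 e') - C)"
    unfolding Tw_def Awalk_def nbr_sum[OF v] using M by simp
  also have "\<dots> = (1 / deg E v) *\<^sub>R (\<Sum>e'\<in>nb E v. gf E S2 \<Phi> (endpt S2 e')) - C"
    using dpos by (simp add: sum_subtractf deg_nb sum_constant_scaleR scaleR_diff_right)
  finally show ?thesis using L unfolding v_def Pall_def C_def by simp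
qed

lemma K2: assumes z: "\<forall>v\<in>S1. \<phi> v = 0" and v: "v \<in> S2"
  shows "Tw V E S1 S2 \<phi> v = 0"
proof -
  have "\<And>u. u \<in> {u\<in>V. {u, v} \<in> E} \<Longrightarrow> \<phi> u - Msides E S1 S2 \<phi> u = 0"
  proof -
    fix u assume u: "u \<in> {u\<in>V. {u, v} \<in> E}"
    hence e: "{u,v} \<in> E" by auto
    have "endpt S1 {u,v} = u" using bip.endpt2_pair[OF swap v] e by (simp add: insert_commute)
    hence uS: "u \<in> S1" using endpt1[OF e] by simp
    have s0: "(\<Sum>w\<in>S1. deg E w *\<^sub>R \<phi> w) = 0" by (intro sum.neutral) (simp add: z)
    have "Msides E S1 S2 \<phi> u = 0" unfolding Msides_S1[OF uS] s0 by simp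
    thus "\<phi> u - Msides E S1 S2 \<phi> u = 0" using z uS by simp
  qed
  thus ?thesis unfolding Tw_def Awalk_def by simp
qed

lemma Tw_cong: "(\<And>v. v \<in> V \<Longrightarrow> f v = f' v) \<Longrightarrow> Tw V E S1 S2 f = Tw V E S1 S2 f'"
proof -
  assume h: "\<And>v. v \<in> V \<Longrightarrow> f v = f' v"
  have "\<And>u. u \<in> V \<Longrightarrow> Msides E S1 S2 f u = Msides E S1 S2 f' u"
    unfolding Msides_def using h VS by (auto intro!: sum.cong)
  thus ?thesis unfolding Tw_def Awalk_def using h by (auto intro!: sum.cong ext)
qed

lemma Msides_add: "Msides E S1 S2 (\<lambda>v. f v + f' v) u = Msides E S1 S2 f u + Msides E S1 S2 f' u"
  unfolding Msides_def by (simp add: sum.distrib scaleR_add_right)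

lemma Awalk_add: "Awalk V E (\<lambda>v. f v + f' v) u = Awalk V E f u + Awalk V E f' u"
  unfolding Awalk_def by (simp add: sum.distrib scaleR_add_right)

lemma Tw_add: "Tw V E S1 S2 (\<lambda>v. f v + f' v) v = Tw V E S1 S2 f v + Tw V E S1 S2 f' v"
proof -
  have "(\<lambda>v. f v + f' v - Msides E S1 S2 (\<lambda>v. f v + f' v) v)
      = (\<lambda>v. (f v - Msides E S1 S2 f v) + (f' v - Msides E S1 S2 f' v))"
    by (simp add: Msides_add fun_eq_iff algebra_simps)
  thus ?thesis unfolding Tw_def by (simp add: Awalk_add)
qed


lemma normE1: "wl2norm E (\<lambda>_. 1) (\<lambda>e. \<psi> (endpt S1 e)) = wl2norm S1 (deg E) \<psi>"
proof -
  have "(\<Sum>e\<in>E. 1 * (norm (\<psi> (endpt S1 e)))\<^sup>2) = (\<Sum>v\<in>S1. \<Sum>e\<in>nb E v. 1 * (norm (\<psi> (endpt S1 e)))\<^sup>2)"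
    by (rule regroup)
  also have "\<dots> = (\<Sum>v\<in>S1. deg E v * (norm (\<psi> v))\<^sup>2)"
  proof (rule sum.cong[OF refl])
    fix v assume v: "v \<in> S1"
    have "(\<Sum>e\<in>nb E v. 1 * (norm (\<psi> (endpt S1 e)))\<^sup>2) = (\<Sum>e\<in>nb E v. (norm (\<psi> v))\<^sup>2)"
      by (rule sum.cong[OF refl]) (use v endpt1_iff in \<open>auto simp: nb_def\<close>)
    thus "(\<Sum>e\<in>nb E v. 1 * (norm (\<psi> (endpt S1 e)))\<^sup>2) = deg E v * (norm (\<psi> v))\<^sup>2"
      by (simp add: deg_nb)
  qed
  finally show ?thesis unfolding wl2norm_def by simp
qed

lemma normV1: assumes "\<And>v. v \<in> S2 \<Longrightarrow> \<psi> v = 0"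
  shows "wl2norm V (deg E) \<psi> = wl2norm S1 (deg E) \<psi>"
proof -
  have "(\<Sum>v\<in>V. deg E v * (norm (\<psi> v))\<^sup>2) = (\<Sum>v\<in>S1. deg E v * (norm (\<psi> v))\<^sup>2)"
    by (rule sum.mono_neutral_right) (use finV VS disj assms in auto)
  thus ?thesis unfolding wl2norm_def by simp
qed

lemma jensen_term:
  fixes x :: "'a \<Rightarrow> 'b::real_normed_vector"
  assumes "finite A" "card A > 0"
  shows "real (card A) * (norm ((1 / real (card A)) *\<^sub>R (\<Sum>a\<in>A. x a)))\<^sup>2 \<le> (\<Sum>a\<in>A. (norm (x a))\<^sup>2)"
proof -
  define d where "d = real (card A)"
  have d: "d > 0" using assms d_def by simp
  have n1: "norm (\<Sum>a\<in>A. x a) \<le> (\<Sum>a\<in>A. norm (x a))" by (rule norm_sum)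
  have "(norm (\<Sum>a\<in>A. x a))\<^sup>2 \<le> (\<Sum>a\<in>A. norm (x a))\<^sup>2"
    using n1 by (simp add: power_mono)
  also have "\<dots> \<le> (\<Sum>a\<in>A. (norm (x a))\<^sup>2) * d"
    unfolding d_def by (rule sum_squared_le_sum_of_squares)
  finally have h: "(norm (\<Sum>a\<in>A. x a))\<^sup>2 \<le> (\<Sum>a\<in>A. (norm (x a))\<^sup>2) * d" .
  have "d * (norm ((1 / d) *\<^sub>R (\<Sum>a\<in>A. x a)))\<^sup>2 = (norm (\<Sum>a\<in>A. x a))\<^sup>2 / d"
    using d by (simp add: power2_eq_square field_simps)
  also have "\<dots> \<le> (\<Sum>a\<in>A. (norm (x a))\<^sup>2)"
    using h d by (simp add: divide_le_eq)
  finally show ?thesis unfolding d_def .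
qed

lemma jensen: "wl2norm V (deg E) (gf E S2 \<Phi>) \<le> wl2norm E (\<lambda>_. 1) \<Phi>"
proof -
  have "(\<Sum>v\<in>V. deg E v * (norm (gf E S2 \<Phi> v))\<^sup>2) = (\<Sum>v\<in>S2. deg E v * (norm (gf E S2 \<Phi> v))\<^sup>2)"
    by (rule sum.mono_neutral_right) (use finV VS disj in \<open>auto simp: gf_def\<close>)
  also have "\<dots> \<le> (\<Sum>v\<in>S2. \<Sum>e\<in>nb E v. (norm (\<Phi> e))\<^sup>2)"
  proof (rule sum_mono)
    fix v assume v: "v \<in> S2"
    hence "deg E v > 0" using deg_pos VS by auto
    hence "card (nb E v) > 0" by (simp add: deg_nb)
    thus "deg E v * (norm (gf E S2 \<Phi> v))\<^sup>2 \<le> (\<Sum>e\<in>nb E v. (norm (\<Phi> e))\<^sup>2)"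
      using jensen_term[OF fin_nb, of v \<Phi>] v unfolding gf_def deg_nb by simp
  qed
  also have "\<dots> = (\<Sum>e\<in>E. 1 * (norm (\<Phi> e))\<^sup>2)" using regroup2[of "\<lambda>e. (norm (\<Phi> e))\<^sup>2"] by simp
  finally show ?thesis unfolding wl2norm_def by (rule real_sqrt_le_mono)
qed

lemma gf_of: assumes "\<And>v. v \<in> S1 \<Longrightarrow> \<phi> v = 0" and "v \<in> V"
  shows "gf E S2 (\<lambda>e. \<phi> (endpt S2 e)) v = \<phi> v"
proof (cases "v \<in> S2")
  case True
  have "(\<Sum>e\<in>nb E v. \<phi> (endpt S2 e)) = (\<Sum>e\<in>nb E v. \<phi> v)"
    by (rule sum.cong[OF refl]) (use True endpt2_iff in \<open>auto simp: nb_def\<close>)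
  moreover have "deg E v > 0" using deg_pos assms(2) by auto
  ultimately show ?thesis using True unfolding gf_def by (simp add: deg_nb sum_constant_scaleR)
next
  case False
  thus ?thesis using assms VS unfolding gf_def by auto
qed

lemma main_a: "wl2norm E (\<lambda>_. 1) (\<lambda>e. Pside E S1 (Pside E S2 \<Phi>) e - Pall E \<Phi> e)
   = wl2norm V (deg E) (Tw V E S1 S2 (gf E S2 \<Phi>))"
proof -
  have "wl2norm E (\<lambda>_. 1) (\<lambda>e. Pside E S1 (Pside E S2 \<Phi>) e - Pall E \<Phi> e)
     = wl2norm E (\<lambda>_. 1) (\<lambda>e. Tw V E S1 S2 (gf E S2 \<Phi>) (endpt S1 e))"
    by (rule wl2norm_cong) (rule K1)
  also have "\<dots> = wl2norm S1 (deg E) (Tw V E S1 S2 (gf E S2 \<Phi>))" by (rule normE1)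
  also have "\<dots> = wl2norm V (deg E) (Tw V E S1 S2 (gf E S2 \<Phi>))"
  proof (rule normV1[symmetric])
    fix v assume "v \<in> S2"
    moreover have "\<forall>v\<in>S1. gf E S2 \<Phi> v = 0" using disj unfolding gf_def by auto
    ultimately show "Tw V E S1 S2 (gf E S2 \<Phi>) v = 0" using K2 by blast
  qed
  finally show ?thesis .
qed

lemma main_b: assumes z: "\<And>v. v \<in> S1 \<Longrightarrow> \<phi> v = 0"
  shows "wl2norm V (deg E) (Tw V E S1 S2 \<phi>)
     = wl2norm E (\<lambda>_. 1) (\<lambda>e. Pside E S1 (Pside E S2 (\<lambda>e. \<phi> (endpt S2 e))) e - Pall E (\<lambda>e. \<phi> (endpt S2 e)) e)"
    and "wl2norm E (\<lambda>_. 1) (\<lambda>e. \<phi> (endpt S2 e)) = wl2norm V (deg E) \<phi>"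
proof -
  have "Tw V E S1 S2 (gf E S2 (\<lambda>e. \<phi> (endpt S2 e))) = Tw V E S1 S2 \<phi>"
    by (rule Tw_cong) (rule gf_of[OF z])
  thus "wl2norm V (deg E) (Tw V E S1 S2 \<phi>)
     = wl2norm E (\<lambda>_. 1) (\<lambda>e. Pside E S1 (Pside E S2 (\<lambda>e. \<phi> (endpt S2 e))) e - Pall E (\<lambda>e. \<phi> (endpt S2 e)) e)"
    using main_a[of "\<lambda>e. \<phi> (endpt S2 e)"] by simp
  have "wl2norm E (\<lambda>_. 1) (\<lambda>e. \<phi> (endpt S2 e)) = wl2norm S2 (deg E) \<phi>"
    by (rule bip.normE1[OF swap])
  also have "\<dots> = wl2norm V (deg E) \<phi>"
    using bip.normV1[OF swap, of \<phi>] z by (simp add: VS Un_commute)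
  finally show "wl2norm E (\<lambda>_. 1) (\<lambda>e. \<phi> (endpt S2 e)) = wl2norm V (deg E) \<phi>" .
qed


lemma Tw_swap: "Tw V E S2 S1 = Tw V E S1 S2"
  unfolding Tw_def Msides_swap ..

lemma N_scale: fixes \<Phi> :: "'v set \<Rightarrow> 'b::real_normed_vector"
  shows "wl2norm E (\<lambda>_. 1) (Q E S1 S2 \<Phi>) \<le> wl2opnorm E (\<lambda>_. 1) (Q E S1 S2 :: ('v set \<Rightarrow> 'b) \<Rightarrow> _) * wl2norm E (\<lambda>_. 1) \<Phi>"
  by (rule opnorm_scale) (simp_all add: Q_hom Q_bdd finE)

lemma N_nonneg: "wl2opnorm E (\<lambda>_. 1) (Q E S1 S2 :: ('v set \<Rightarrow> 'b::real_normed_vector) \<Rightarrow> _) \<ge> 0"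
proof -
  have "wl2norm E (\<lambda>_. 1) (Q E S1 S2 (\<lambda>_. 0::'b)) \<le> wl2opnorm E (\<lambda>_. 1) (Q E S1 S2 :: ('v set \<Rightarrow> 'b) \<Rightarrow> _)"
    by (rule opnorm_ge[OF Q_bdd[OF finE]]) (simp add: wl2norm_zero)
  moreover have "wl2norm E (\<lambda>_. 1) (Q E S1 S2 (\<lambda>_. 0::'b)) \<ge> 0" by (rule wl2norm_nonneg) simp
  ultimately show ?thesis by linarith
qed

lemma Tw_bound:
  fixes \<phi> :: "'v \<Rightarrow> 'b::real_normed_vector"
  assumes n1: "wl2norm V (deg E) \<phi> \<le> 1"
  shows "wl2norm V (deg E) (Tw V E S1 S2 \<phi>)
     \<le> max (wl2opnorm E (\<lambda>_. 1) (Q E S1 S2 :: ('v set \<Rightarrow> 'b) \<Rightarrow> _)) (wl2opnorm E (\<lambda>_. 1) (Q E S2 S1 :: ('v set \<Rightarrow> 'b) \<Rightarrow> _))"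
proof -
  define N1 where "N1 = wl2opnorm E (\<lambda>_. 1) (Q E S1 S2 :: ('v set \<Rightarrow> 'b) \<Rightarrow> _)"
  define N2 where "N2 = wl2opnorm E (\<lambda>_. 1) (Q E S2 S1 :: ('v set \<Rightarrow> 'b) \<Rightarrow> _)"
  define M where "M = max N1 N2"
  have N10: "N1 \<ge> 0" unfolding N1_def by (rule N_nonneg)
  have N20: "N2 \<ge> 0" unfolding N2_def by (rule bip.N_nonneg[OF swap])
  define \<phi>1 where "\<phi>1 = (\<lambda>v. if v \<in> S1 then \<phi> v else 0)"
  define \<phi>2 where "\<phi>2 = (\<lambda>v. if v \<in> S2 then \<phi> v else 0)"
  have z2: "\<And>v. v \<in> S1 \<Longrightarrow> \<phi>2 v = 0" unfolding \<phi>2_def using disj by auto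
  have z1: "\<And>v. v \<in> S2 \<Longrightarrow> \<phi>1 v = 0" unfolding \<phi>1_def using disj by auto
  define sq where "sq = (\<lambda>f :: 'v \<Rightarrow> 'b. \<Sum>v\<in>V. deg E v * (norm (f v))\<^sup>2)"
  have sq0: "\<And>f. sq f \<ge> 0" unfolding sq_def deg_def by (intro sum_nonneg) simp
  have wsq: "\<And>f. wl2norm V (deg E) f = sqrt (sq f)" unfolding sq_def wl2norm_def ..
  have T2: "wl2norm V (deg E) (Tw V E S1 S2 \<phi>2) \<le> N1 * wl2norm V (deg E) \<phi>2"
  proof -
    have "wl2norm V (deg E) (Tw V E S1 S2 \<phi>2) = wl2norm E (\<lambda>_. 1) (Q E S1 S2 (\<lambda>e. \<phi>2 (endpt S2 e)))"
      using main_b(1)[of \<phi>2, OF z2] unfolding Q_def by simp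
    also have "\<dots> \<le> N1 * wl2norm E (\<lambda>_. 1) (\<lambda>e. \<phi>2 (endpt S2 e))" unfolding N1_def by (rule N_scale)
    also have "\<dots> = N1 * wl2norm V (deg E) \<phi>2" using main_b(2)[of \<phi>2, OF z2] by simp
    finally show ?thesis .
  qed
  have T1: "wl2norm V (deg E) (Tw V E S1 S2 \<phi>1) \<le> N2 * wl2norm V (deg E) \<phi>1"
  proof -
    have "wl2norm V (deg E) (Tw V E S1 S2 \<phi>1) = wl2norm E (\<lambda>_. 1) (Q E S2 S1 (\<lambda>e. \<phi>1 (endpt S1 e)))"
      using bip.main_b(1)[OF swap, of \<phi>1, OF z1] unfolding Q_def Tw_swap by simp
    also have "\<dots> \<le> N2 * wl2norm E (\<lambda>_. 1) (\<lambda>e. \<phi>1 (endpt S1 e))" unfolding N2_def by (rule bip.N_scale[OF swap])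
    also have "\<dots> = N2 * wl2norm V (deg E) \<phi>1" using bip.main_b(2)[OF swap, of \<phi>1, OF z1] by simp
    finally show ?thesis .
  qed
  have s2: "sq (Tw V E S1 S2 \<phi>2) \<le> N1\<^sup>2 * sq \<phi>2" using T2 unfolding wsq by (rule sq_from_sqrt[OF sq0 sq0 N10])
  have s1: "sq (Tw V E S1 S2 \<phi>1) \<le> N2\<^sup>2 * sq \<phi>1" using T1 unfolding wsq by (rule sq_from_sqrt[OF sq0 sq0 N20])
  have dec: "Tw V E S1 S2 \<phi> v = Tw V E S1 S2 \<phi>1 v + Tw V E S1 S2 \<phi>2 v" for v
  proof -
    have "Tw V E S1 S2 \<phi> = Tw V E S1 S2 (\<lambda>v. \<phi>1 v + \<phi>2 v)"
      by (rule Tw_cong) (use VS disj in \<open>auto simp: \<phi>1_def \<phi>2_def\<close>)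
    thus ?thesis by (simp add: Tw_add)
  qed
  have Tz1: "v \<in> S1 \<Longrightarrow> Tw V E S1 S2 \<phi>1 v = 0" for v
    using bip.K2[OF swap, of \<phi>1 v] z1 unfolding Tw_swap by blast
  have Tz2: "v \<in> S2 \<Longrightarrow> Tw V E S1 S2 \<phi>2 v = 0" for v
    using K2[of \<phi>2 v] z2 by blast
  have sqT: "sq (Tw V E S1 S2 \<phi>) = sq (Tw V E S1 S2 \<phi>1) + sq (Tw V E S1 S2 \<phi>2)"
    unfolding sq_def sum.distrib[symmetric] distrib_left[symmetric]
  proof (rule sum.cong[OF refl])
    fix v assume "v \<in> V"
    hence "v \<in> S1 \<or> v \<in> S2" using VS by auto
    thus "deg E v * (norm (Tw V E S1 S2 \<phi> v))\<^sup>2 =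
        deg E v * ((norm (Tw V E S1 S2 \<phi>1 v))\<^sup>2 + (norm (Tw V E S1 S2 \<phi>2 v))\<^sup>2)"
      using Tz1 Tz2 dec by auto
  qed
  have sqp: "sq \<phi> = sq \<phi>1 + sq \<phi>2"
    unfolding sq_def sum.distrib[symmetric] distrib_left[symmetric]
  proof (rule sum.cong[OF refl])
    fix v assume "v \<in> V"
    hence "v \<in> S1 \<and> v \<notin> S2 \<or> v \<in> S2 \<and> v \<notin> S1" using VS disj by auto
    thus "deg E v * (norm (\<phi> v))\<^sup>2 = deg E v * ((norm (\<phi>1 v))\<^sup>2 + (norm (\<phi>2 v))\<^sup>2)"
      unfolding \<phi>1_def \<phi>2_def by auto
  qed
  have sqle: "sq \<phi> \<le> 1" using n1 unfolding wsq using sq0[of \<phi>] by (simp add: sqrt_le_D)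
  have M0: "M \<ge> 0" unfolding M_def using N10 by linarith
  have "N1\<^sup>2 \<le> M\<^sup>2" unfolding M_def by (rule power_mono) (use N10 in auto)
  moreover have "N2\<^sup>2 \<le> M\<^sup>2" unfolding M_def by (rule power_mono) (use N20 in auto)
  ultimately have "N1\<^sup>2 * sq \<phi>2 + N2\<^sup>2 * sq \<phi>1 \<le> M\<^sup>2 * sq \<phi>2 + M\<^sup>2 * sq \<phi>1"
    using sq0[of \<phi>1] sq0[of \<phi>2] by (intro add_mono mult_right_mono) auto
  also have "\<dots> = M\<^sup>2 * sq \<phi>" unfolding sqp by (simp add: algebra_simps)
  also have "\<dots> \<le> M\<^sup>2" using sqle by (simp add: mult_left_le)
  finally have "sq (Tw V E S1 S2 \<phi>) \<le> M\<^sup>2" using sqT s1 s2 by linarith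
  hence "sqrt (sq (Tw V E S1 S2 \<phi>)) \<le> sqrt (M\<^sup>2)" by (rule real_sqrt_le_mono)
  thus ?thesis unfolding wsq M_def[symmetric] N1_def[symmetric] N2_def[symmetric] using M0 by simp
qed

lemma final:
  "max (wl2opnorm E (\<lambda>_. 1) (Q E S1 S2 :: ('v set \<Rightarrow> 'b::real_normed_vector) \<Rightarrow> _)) (wl2opnorm E (\<lambda>_. 1) (Q E S2 S1 :: ('v set \<Rightarrow> 'b) \<Rightarrow> _))
   = wl2opnorm V (deg E) (Tw V E S1 S2 :: ('v \<Rightarrow> 'b) \<Rightarrow> _)"
proof -
  define N1 where "N1 = wl2opnorm E (\<lambda>_. 1) (Q E S1 S2 :: ('v set \<Rightarrow> 'b) \<Rightarrow> _)"
  define N2 where "N2 = wl2opnorm E (\<lambda>_. 1) (Q E S2 S1 :: ('v set \<Rightarrow> 'b) \<Rightarrow> _)"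
  define L where "L = wl2opnorm V (deg E) (Tw V E S1 S2 :: ('v \<Rightarrow> 'b) \<Rightarrow> _)"
  have bddL: "bdd_above ((\<lambda>f. wl2norm V (deg E) (Tw V E S1 S2 f)) ` {f :: 'v \<Rightarrow> 'b. wl2norm V (deg E) f \<le> 1})"
    by (rule bdd_aboveI2) (use Tw_bound in auto)
  have "L \<le> max N1 N2" unfolding L_def N1_def N2_def by (rule opnorm_le) (rule Tw_bound)
  moreover have "N1 \<le> L" unfolding N1_def
  proof (rule opnorm_le)
    fix \<Phi> :: "'v set \<Rightarrow> 'b" assume h: "wl2norm E (\<lambda>_. 1) \<Phi> \<le> 1"
    have "wl2norm E (\<lambda>_. 1) (Q E S1 S2 \<Phi>) = wl2norm V (deg E) (Tw V E S1 S2 (gf E S2 \<Phi>))"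
      unfolding Q_def by (rule main_a)
    also have "\<dots> \<le> L" unfolding L_def
      by (rule opnorm_ge[OF bddL]) (use jensen[of \<Phi>] h in linarith)
    finally show "wl2norm E (\<lambda>_. 1) (Q E S1 S2 \<Phi>) \<le> L" .
  qed
  moreover have "N2 \<le> L" unfolding N2_def
  proof (rule opnorm_le)
    fix \<Phi> :: "'v set \<Rightarrow> 'b" assume h: "wl2norm E (\<lambda>_. 1) \<Phi> \<le> 1"
    have "wl2norm E (\<lambda>_. 1) (Q E S2 S1 \<Phi>) = wl2norm V (deg E) (Tw V E S1 S2 (gf E S1 \<Phi>))"
      unfolding Q_def Tw_swap[symmetric] by (rule bip.main_a[OF swap])
    also have "\<dots> \<le> L" unfolding L_def
      by (rule opnorm_ge[OF bddL]) (use bip.jensen[OF swap, of \<Phi>] h in linarith)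
    finally show "wl2norm E (\<lambda>_. 1) (Q E S2 S1 \<Phi>) \<le> L" .
  qed
  ultimately show ?thesis unfolding N1_def[symmetric] N2_def[symmetric] L_def[symmetric] by linarith
qed

end

theorem proposition2p22:
  fixes V :: "'v set" and E :: "'v set set" and S1 S2 :: "'v set"
  assumes "finite V"
    and "E \<noteq> {}"
    and "\<forall>e\<in>E. e \<subseteq> V"
    and "bipartite_sides V E S1 S2"
    and "connected_graph V E"
  shows "(\<forall>\<Phi>::'v set \<Rightarrow> 'b::banach. \<forall>e\<in>E.
            Pall E (Pside E S1 \<Phi>) e = Pall E \<Phi> e \<and> Pside E S1 (Pall E \<Phi>) e = Pall E \<Phi> e \<and>
            Pall E (Pside E S2 \<Phi>) e = Pall E \<Phi> e \<and> Pside E S2 (Pall E \<Phi>) e = Pall E \<Phi> e)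
       \<and> max (wl2opnorm E (\<lambda>_. 1) (\<lambda>\<Phi>::'v set \<Rightarrow> 'b. \<lambda>e. Pside E S1 (Pside E S2 \<Phi>) e - Pall E \<Phi> e))
             (wl2opnorm E (\<lambda>_. 1) (\<lambda>\<Phi>::'v set \<Rightarrow> 'b. \<lambda>e. Pside E S2 (Pside E S1 \<Phi>) e - Pall E \<Phi> e))
         = lambda_bip TYPE('b) V E S1 S2"
proof -
  have B: "bip V E S1 S2" unfolding bip_def using assms by blast
  have B2: "bip V E S2 S1" by (rule bip.swap[OF B])
  have Q1: "(\<lambda>\<Phi>::'v set \<Rightarrow> 'b. \<lambda>e. Pside E S1 (Pside E S2 \<Phi>) e - Pall E \<Phi> e) = Q E S1 S2"
    by (rule ext) (simp add: Q_def)
  have Q2: "(\<lambda>\<Phi>::'v set \<Rightarrow> 'b. \<lambda>e. Pside E S2 (Pside E S1 \<Phi>) e - Pall E \<Phi> e) = Q E S2 S1"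
    by (rule ext) (simp add: Q_def)
  have L: "lambda_bip TYPE('b) V E S1 S2 = wl2opnorm V (deg E) (Tw V E S1 S2 :: ('v \<Rightarrow> 'b) \<Rightarrow> _)"
  proof -
    have "(\<lambda>\<phi>::'v \<Rightarrow> 'b. Awalk V E (\<lambda>v. \<phi> v - Msides E S1 S2 \<phi> v)) = Tw V E S1 S2"
      by (rule ext) (simp add: Tw_def)
    thus ?thesis unfolding lambda_bip_def by simp
  qed
  show ?thesis
  proof
    show "\<forall>\<Phi>::'v set \<Rightarrow> 'b. \<forall>e\<in>E.
            Pall E (Pside E S1 \<Phi>) e = Pall E \<Phi> e \<and> Pside E S1 (Pall E \<Phi>) e = Pall E \<Phi> e \<and>
            Pall E (Pside E S2 \<Phi>) e = Pall E \<Phi> e \<and> Pside E S2 (Pall E \<Phi>) e = Pall E \<Phi> e"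
      using bip.Pall_Pside[OF B] bip.Pside_Pall[OF B] bip.Pall_Pside[OF B2] bip.Pside_Pall[OF B2]
      by blast
    show "max (wl2opnorm E (\<lambda>_. 1) (\<lambda>\<Phi>::'v set \<Rightarrow> 'b. \<lambda>e. Pside E S1 (Pside E S2 \<Phi>) e - Pall E \<Phi> e))
             (wl2opnorm E (\<lambda>_. 1) (\<lambda>\<Phi>::'v set \<Rightarrow> 'b. \<lambda>e. Pside E S2 (Pside E S1 \<Phi>) e - Pall E \<Phi> e))
         = lambda_bip TYPE('b) V E S1 S2"
      unfolding Q1 Q2 L by (rule bip.final[OF B])
  qed
qed

end
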